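(* Let $T\colon\mathscr C\to\mathscr C$ be a homeomorphism of the Cantor set with exactly one fixed point $x^0$ such that for every $x\ne x^0$ and every $m\in\mathbb N$ the set $\{T^{mk}(x):k\in\mathbb Z\}$ is dense in $\mathscr C$. Let $\mathscr C=A\sqcup B$ be a partition into clopen sets with $x^0\in A$. Let $\hat X=A\times\{0,1\}\sqcup B\times\{0\}$ and define $f\colon\hat X\to\hat X$ by $f(x,i)=(T(x),1)$ if $i=0$ and $T(x)\in A$, and $f(x,i)=(T(x),0)$ otherwise. For $x\in\mathscr C$ let $N(x,B)=\min\{k\in\mathbb N_0: T^{-k}(x)\in B\}$ (with $N(x,B)=\infty$ if no such $k$ exists), let $U=\{x\in\mathscr C: N(x,B)<\infty\}$, let $X=\overline{\{(x,N(x,B)\bmod 2):x\in U\}}$ (closure in $\hat X$), and let $\pi\colon\hat X\to\mathscr C$ be $\pi(x,i)=x$. Then $f(X)=X$, and for every $(x,i)\in X\setminus\pi^{-1}(x^0)$, every $m\in\mathbb N$, and every full orbit $(y_k)_{k\in\mathbb Z}$ of $(x,i)$ in $X$ (i.e. $y_k\in X$, $y_0=(x,i)$, $f(y_k)=y_{k+1}$ for all $k$), we have $\overline{\{y_{mk}:k\in\mathbb Z\}}=X$.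
   Context: $\mathscr C$ denotes the Cantor set; $\mathbb N_0=\{0,1,2,\dots\}$. *)

theory Defs
  imports "HOL-Analysis.Analysis"
begin

definition cantor_set :: "real set" where
  "cantor_set = range (\<lambda>a::nat \<Rightarrow> bool. \<Sum>n. (if a n then 2 else 0) / 3 ^ (Suc n))"

definition zpow :: "('a \<Rightarrow> 'a) \<Rightarrow> ('a \<Rightarrow> 'a) \<Rightarrow> int \<Rightarrow> 'a \<Rightarrow> 'a" where
  "zpow T Tinv k = (if k \<ge> 0 then T ^^ nat k else Tinv ^^ nat (- k))"

definition skew_f :: "real set \<Rightarrow> (real \<Rightarrow> real) \<Rightarrow> real \<times> nat \<Rightarrow> real \<times> nat" where
  "skew_f A T = (\<lambda>(x, i). if i = 0 \<and> T x \<in> A then (T x, 1) else (T x, 0))"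

definition hatX :: "real set \<Rightarrow> real set \<Rightarrow> (real \<times> nat) set" where
  "hatX A B = A \<times> {0, 1} \<union> B \<times> {0}"

text \<open>Set U of points with finite N(x,B), and N(x,B) itself (meaningful on U).\<close>
definition U_set :: "(real \<Rightarrow> real) \<Rightarrow> real set \<Rightarrow> real set" where
  "U_set Tinv B = {x \<in> cantor_set. \<exists>k::nat. (Tinv ^^ k) x \<in> B}"

definition N_B :: "(real \<Rightarrow> real) \<Rightarrow> real set \<Rightarrow> real \<Rightarrow> nat" where
  "N_B Tinv B x = (LEAST k::nat. (Tinv ^^ k) x \<in> B)"

definition X_set :: "(real \<Rightarrow> real) \<Rightarrow> real set \<Rightarrow> (real \<times> nat) set" where
  "X_set Tinv B = closure {(x, N_B Tinv B x mod 2) | x. x \<in> U_set Tinv B}"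

end

theory Submission
  imports Defs
begin


definition cdig :: "(nat \<Rightarrow> bool) \<Rightarrow> nat \<Rightarrow> real" where
  "cdig a n = (if a n then 2 else 0) / 3 ^ Suc n"

definition cval :: "(nat \<Rightarrow> bool) \<Rightarrow> real" where
  "cval a = (\<Sum>n. cdig a n)"

lemma cantor_set_eq: "cantor_set = range cval"
  unfolding cantor_set_def cval_def cdig_def by simp

lemma geo_tail: "(\<Sum>n. 2 / 3 ^ Suc (n + M) :: real) = (1/3)^M"
  and geo_tail_summable: "summable (\<lambda>n. 2 / 3 ^ Suc (n + M) :: real)"
proof -
  have eq: "(\<lambda>n. 2 / 3 ^ Suc (n + M) :: real) = (\<lambda>n. (2 * (1/3)^Suc M) * (1/3)^n)"
    by (rule ext) (simp add: power_add power_divide field_simps)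
  have s: "summable (\<lambda>n. (1/3::real)^n)" by simp
  show "summable (\<lambda>n. 2 / 3 ^ Suc (n + M) :: real)"
    unfolding eq by (intro summable_mult s)
  have "(\<Sum>n. (2 * (1/3)^Suc M) * (1/3::real)^n) = (2 * (1/3)^Suc M) * (\<Sum>n. (1/3::real)^n)"
    by (rule suminf_mult[OF s])
  also have "\<dots> = (1/3)^M"
  proof -
    have h: "(\<Sum>n. (1/3::real)^n) = 3/2" by (subst suminf_geometric) auto
    show ?thesis unfolding h by (simp add: power_divide)
  qed
  finally show "(\<Sum>n. 2 / 3 ^ Suc (n + M) :: real) = (1/3)^M" unfolding eq .
qed

lemma cdig_bound: "\<bar>cdig a n - cdig b n\<bar> \<le> 2 / 3 ^ Suc n"
  by (simp add: cdig_def)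

lemma cdig_summable: "summable (cdig a)"
proof (rule summable_comparison_test[where g="\<lambda>n. 2 / 3 ^ Suc (n + 0)"])
  show "\<exists>N. \<forall>n\<ge>N. norm (cdig a n) \<le> 2 / 3 ^ Suc (n + 0)" by (auto simp: cdig_def)
  show "summable (\<lambda>n. 2 / 3 ^ Suc (n + 0) :: real)" by (rule geo_tail_summable)
qed

lemma tail_bound:
  fixes g :: "nat \<Rightarrow> real"
  assumes "\<And>n. \<bar>g n\<bar> \<le> 2 / 3 ^ Suc n"
  shows "summable (\<lambda>n. g (n + M))" "\<bar>\<Sum>n. g (n + M)\<bar> \<le> (1/3)^M"
proof -
  have b: "\<And>n. norm (g (n + M)) \<le> 2 / 3 ^ Suc (n + M)" using assms by simp
  show sg: "summable (\<lambda>n. g (n + M))"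
    by (rule summable_comparison_test[OF _ geo_tail_summable]) (use b in blast)
  have sa: "summable (\<lambda>n. \<bar>g (n + M)\<bar>)"
    by (rule summable_comparison_test[OF _ geo_tail_summable]) (use b in auto)
  have "\<bar>\<Sum>n. g (n + M)\<bar> \<le> (\<Sum>n. \<bar>g (n + M)\<bar>)"
    by (rule summable_rabs[OF sa])
  also have "\<dots> \<le> (\<Sum>n. 2 / 3 ^ Suc (n + M))"
    by (rule suminf_le[OF _ sa geo_tail_summable]) (use b in auto)
  finally show "\<bar>\<Sum>n. g (n + M)\<bar> \<le> (1/3)^M" by (simp only: geo_tail)
qed

lemma cval_diff: "cval a - cval b = (\<Sum>n. cdig a n - cdig b n)"
  unfolding cval_def using suminf_diff[OF cdig_summable cdig_summable, of a b] by simp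

lemma E1:
  assumes "\<And>n. n < M \<Longrightarrow> a n = b n"
  shows "\<bar>cval a - cval b\<bar> \<le> (1/3)^M"
proof -
  let ?g = "\<lambda>n. cdig a n - cdig b n"
  have sg: "summable ?g" by (intro summable_diff cdig_summable)
  have "cval a - cval b = (\<Sum>n. ?g (n + M)) + (\<Sum>i<M. ?g i)"
    unfolding cval_diff by (rule suminf_split_initial_segment[OF sg])
  also have "(\<Sum>i<M. ?g i) = 0" using assms by (simp add: cdig_def)
  finally show ?thesis using tail_bound(2)[of ?g M] cdig_bound by simp
qed

lemma E2:
  assumes "\<And>n. n < N \<Longrightarrow> a n = b n" "a N \<noteq> b N"
  shows "\<bar>cval a - cval b\<bar> \<ge> (1/3)^Suc N"
proof -
  let ?g = "\<lambda>n. cdig a n - cdig b n"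
  have sg: "summable ?g" by (intro summable_diff cdig_summable)
  have "cval a - cval b = (\<Sum>n. ?g (n + Suc N)) + (\<Sum>i<Suc N. ?g i)"
    unfolding cval_diff by (rule suminf_split_initial_segment[OF sg])
  also have "(\<Sum>i<Suc N. ?g i) = ?g N" using assms(1) by (simp add: cdig_def)
  finally have eq: "cval a - cval b = (\<Sum>n. ?g (n + Suc N)) + ?g N" .
  have t: "\<bar>\<Sum>n. ?g (n + Suc N)\<bar> \<le> (1/3)^Suc N" using tail_bound(2)[of ?g "Suc N"] cdig_bound by simp
  have gN: "\<bar>?g N\<bar> = 2 * (1/3)^Suc N" using assms(2) by (cases "a N") (auto simp: cdig_def power_divide)
  show ?thesis using eq t gN by linarith
qed

lemma E2':
  assumes "\<bar>cval a - cval b\<bar> < (1/3)^Suc N" "n \<le> N"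
  shows "a n = b n"
proof (rule ccontr)
  assume "a n \<noteq> b n"
  define M where "M = (LEAST k. a k \<noteq> b k)"
  have M1: "a M \<noteq> b M" unfolding M_def by (rule LeastI) fact
  have M2: "\<And>k. k < M \<Longrightarrow> a k = b k" unfolding M_def using not_less_Least by blast
  have "M \<le> n" unfolding M_def by (rule Least_le) fact
  have "(1/3::real)^Suc N \<le> (1/3)^Suc M"
    by (rule power_decreasing) (use \<open>M \<le> n\<close> assms(2) in auto)
  with E2[of M a b, OF M2 M1] assms(1) show False by linarith
qed

lemma small_pow: "0 < (e::real) \<Longrightarrow> \<exists>N. (1/3::real)^N < e"
  using real_arch_pow_inv[of e "1/3"] by auto

lemma cantor_closed: "closed cantor_set"
  unfolding closed_sequential_limits
proof (intro allI impI, elim conjE)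
  fix x :: "nat \<Rightarrow> real" and l
  assume xC: "\<forall>n. x n \<in> cantor_set" and lim: "x \<longlonglongrightarrow> l"
  define dg where "dg n = (SOME a. x n = cval a)" for n
  have dg: "x n = cval (dg n)" for n
  proof -
    have "\<exists>a. x n = cval a" using xC unfolding cantor_set_eq by auto
    then show ?thesis unfolding dg_def by (rule someI_ex)
  qed
  have cau: "Cauchy x" by (rule LIMSEQ_imp_Cauchy[OF lim])
  have "\<forall>N. \<exists>J. \<forall>j\<ge>J. \<forall>k\<ge>J. norm (x j - x k) < (1/3::real)^Suc N"
  proof
    fix N
    have "(0::real) < (1/3)^Suc N" by simp
    from CauchyD[OF cau this] show "\<exists>J. \<forall>j\<ge>J. \<forall>k\<ge>J. norm (x j - x k) < (1/3::real)^Suc N" .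
  qed
  then obtain J where J: "\<And>N j k. j \<ge> J N \<Longrightarrow> k \<ge> J N \<Longrightarrow> norm (x j - x k) < (1/3::real)^Suc N"
    by metis
  define a where "a n = dg (J n) n" for n
  define K where "K N = Max (J ` {..N})" for N
  have agree: "dg j n = a n" if "j \<ge> K N" "n \<le> N" for j n N
  proof -
    have "J n \<le> K N" unfolding K_def by (rule Max_ge) (use that in auto)
    then have "norm (x j - x (J n)) < (1/3::real)^Suc n" using that by (intro J) auto
    then have "\<bar>cval (dg j) - cval (dg (J n))\<bar> < (1/3)^Suc n" by (simp add: dg)
    from E2'[OF this order_refl] show ?thesis unfolding a_def .
  qed
  have "x \<longlonglongrightarrow> cval a"
  proof (rule LIMSEQ_I)
    fix r :: real assume "0 < r"
    then obtain N where N: "(1/3::real)^N < r" using small_pow by blast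
    have "norm (x j - cval a) < r" if "j \<ge> K N" for j
    proof -
      have "\<bar>cval (dg j) - cval a\<bar> \<le> (1/3)^Suc N"
        by (rule E1) (use agree that in auto)
      also have "\<dots> \<le> (1/3)^N" by (rule power_decreasing) auto
      finally show ?thesis using N by (simp add: dg)
    qed
    then show "\<exists>no. \<forall>n\<ge>no. norm (x n - cval a) < r" by blast
  qed
  then have "l = cval a" using lim LIMSEQ_unique by blast
  then show "l \<in> cantor_set" unfolding cantor_set_eq by simp
qed

lemma cantor_perfect:
  assumes "x \<in> cantor_set" "0 < e"
  shows "\<exists>w\<in>cantor_set. w \<noteq> x \<and> dist w x < e"
proof -
  obtain a where a: "x = cval a" using assms(1) unfolding cantor_set_eq by auto
  obtain N where N: "(1/3::real)^N < e" using small_pow assms(2) by blast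
  define b where "b = a(N := \<not> a N)"
  have "\<bar>cval b - cval a\<bar> \<ge> (1/3)^Suc N" by (rule E2) (auto simp: b_def)
  moreover have "\<bar>cval b - cval a\<bar> \<le> (1/3)^N" by (rule E1) (auto simp: b_def)
  moreover have "(0::real) < (1/3)^Suc N" by simp
  ultimately have "\<bar>cval b - cval a\<bar> > 0" "\<bar>cval b - cval a\<bar> < e" using N by linarith+
  then have "cval b \<noteq> cval a" "dist (cval b) (cval a) < e" by (auto simp: dist_real_def)
  then show ?thesis unfolding a cantor_set_eq by auto
qed

lemma cantor_bounded: "bounded cantor_set"
proof -
  have "\<bar>cval a\<bar> \<le> 1" for a
  proof -
    have "\<bar>cval a - cval (\<lambda>_. False)\<bar> \<le> (1/3)^0" by (rule E1) auto
    moreover have "cval (\<lambda>_. False) = 0" by (simp add: cval_def cdig_def)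
    ultimately show ?thesis by simp
  qed
  then show ?thesis unfolding cantor_set_eq bounded_iff by auto
qed

lemma cantor_compact: "compact cantor_set"
  using cantor_bounded cantor_closed compact_eq_bounded_closed by blast



lemma closure_prod_iff:
  "((x::real), (j::nat)) \<in> closure R \<longleftrightarrow> (\<forall>e>0. \<exists>v. (v, j) \<in> R \<and> dist v x < e)"
proof
  assume xc: "(x, j) \<in> closure R"
  show "\<forall>e>0. \<exists>v. (v, j) \<in> R \<and> dist v x < e"
  proof (intro allI impI)
    fix e :: real assume "e > 0"
    have op: "open (ball x e \<times> {j})" by (intro open_Times open_ball open_discrete)
    have "(x, j) \<in> (ball x e \<times> {j}) \<inter> closure R" using xc \<open>e > 0\<close> by simp
    then have "(ball x e \<times> {j}) \<inter> R \<noteq> {}" using open_Int_closure_eq_empty[OF op] by blast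
    then show "\<exists>v. (v, j) \<in> R \<and> dist v x < e" by (auto simp: dist_commute)
  qed
next
  assume H: "\<forall>e>0. \<exists>v. (v, j) \<in> R \<and> dist v x < e"
  show "(x, j) \<in> closure R"
    unfolding closure_iff_nhds_not_empty
  proof (intro allI impI)
    fix Q P assume PQ: "P \<subseteq> Q" "open P" "(x, j) \<in> P"
    obtain P1 P2 where P: "open P1" "open P2" "(x, j) \<in> P1 \<times> P2" "P1 \<times> P2 \<subseteq> P"
      using open_prod_elim[OF PQ(2,3)] by blast
    obtain e where e: "e > 0" "ball x e \<subseteq> P1" using P(1,3) open_contains_ball by blast
    obtain v where v: "(v, j) \<in> R" "dist v x < e" using H e(1) by blast
    have "(v, j) \<in> P1 \<times> P2" using v(2) e(2) P(3) by (auto simp: dist_commute)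
    then show "R \<inter> Q \<noteq> {}" using v(1) P(4) PQ(1) by blast
  qed
qed

locale sk =
  fixes T Tinv :: "real \<Rightarrow> real" and x0 :: real and A B :: "real set"
  assumes homeo: "homeomorphism cantor_set cantor_set T Tinv"
    and x0C: "x0 \<in> cantor_set"
    and minimal: "\<And>x m. x \<in> cantor_set \<Longrightarrow> x \<noteq> x0 \<Longrightarrow> m \<ge> (1::nat) \<Longrightarrow>
         cantor_set \<subseteq> closure {zpow T Tinv (int m * k) x | k::int. True}"
    and part1: "A \<union> B = cantor_set" and part2: "A \<inter> B = {}"
    and Aop: "openin (top_of_set cantor_set) A"
    and Bop: "openin (top_of_set cantor_set) B"
    and x0A: "x0 \<in> A"
begin

abbreviation "C \<equiv> cantor_set"
abbreviation "U \<equiv> U_set Tinv B"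
abbreviation "N \<equiv> N_B Tinv B"
abbreviation "S \<equiv> {(x, N x mod 2) | x. x \<in> U}"
abbreviation "X \<equiv> X_set Tinv B"
abbreviation "f \<equiv> skew_f A T"

lemma T_C: "x \<in> C \<Longrightarrow> T x \<in> C" and Tinv_C: "x \<in> C \<Longrightarrow> Tinv x \<in> C"
  and TinvT: "x \<in> C \<Longrightarrow> Tinv (T x) = x" and TTinv: "x \<in> C \<Longrightarrow> T (Tinv x) = x"
  and contT: "continuous_on C T" and contTinv: "continuous_on C Tinv"
  using homeo unfolding homeomorphism_def by auto

lemma Tinvpow_C: "x \<in> C \<Longrightarrow> (Tinv ^^ k) x \<in> C"
  by (induction k) (auto intro: Tinv_C)

lemma Tpow_C: "x \<in> C \<Longrightarrow> (T ^^ k) x \<in> C"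
  by (induction k) (auto intro: T_C)

lemma zpow_C: "x \<in> C \<Longrightarrow> zpow T Tinv k x \<in> C"
  by (simp add: zpow_def Tinvpow_C Tpow_C)

lemma cont_Tinvpow: "continuous_on C (Tinv ^^ k)"
proof (induction k)
  case 0 then show ?case by (simp add: continuous_on_id)
next
  case (Suc k)
  have "continuous_on C (Tinv \<circ> (Tinv ^^ k))"
    by (rule continuous_on_compose[OF Suc]) (rule continuous_on_subset[OF contTinv], auto intro: Tinvpow_C)
  then show ?case by simp
qed

lemma A_C: "A \<subseteq> C" and B_C: "B \<subseteq> C" using part1 by auto

lemma U_C: "x \<in> U \<Longrightarrow> x \<in> C" by (simp add: U_set_def)

lemma N_spec: assumes "x \<in> U" shows "(Tinv ^^ N x) x \<in> B" "\<And>k. k < N x \<Longrightarrow> (Tinv ^^ k) x \<in> A"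
proof -
  from assms obtain k where "(Tinv ^^ k) x \<in> B" by (auto simp: U_set_def)
  then show "(Tinv ^^ N x) x \<in> B" unfolding N_B_def by (rule LeastI)
  fix k assume "k < N x"
  then have "(Tinv ^^ k) x \<notin> B" unfolding N_B_def using not_less_Least by blast
  moreover have "(Tinv ^^ k) x \<in> C" using assms U_C Tinvpow_C by blast
  ultimately show "(Tinv ^^ k) x \<in> A" using part1 by blast
qed

lemma Wa_open: "openin (top_of_set C) {w \<in> C. \<forall>k<n. (Tinv ^^ k) w \<in> A}"
proof (induction n)
  case 0 then show ?case by simp
next
  case (Suc n)
  have eq: "{w \<in> C. \<forall>k<Suc n. (Tinv ^^ k) w \<in> A} = {w \<in> C. \<forall>k<n. (Tinv ^^ k) w \<in> A} \<inter> (C \<inter> (Tinv ^^ n) -` A)"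
    by (auto simp: less_Suc_eq)
  have "openin (top_of_set C) (C \<inter> (Tinv ^^ n) -` A)"
    by (rule continuous_openin_preimage[OF cont_Tinvpow _ Aop]) (auto intro: Tinvpow_C)
  then show ?case unfolding eq using Suc by (rule openin_Int[rotated])
qed

lemma local_const:
  assumes "z \<in> U"
  shows "\<exists>e>0. \<forall>w\<in>C. dist w z < e \<longrightarrow> w \<in> U \<and> N w = N z"
proof -
  define n where "n = N z"
  define W where "W = {w \<in> C. \<forall>k<n. (Tinv ^^ k) w \<in> A} \<inter> (C \<inter> (Tinv ^^ n) -` B)"
  have "openin (top_of_set C) (C \<inter> (Tinv ^^ n) -` B)"
    by (rule continuous_openin_preimage[OF cont_Tinvpow _ Bop]) (auto intro: Tinvpow_C)
  then have opW: "openin (top_of_set C) W" unfolding W_def using Wa_open by (rule openin_Int[rotated])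
  have zW: "z \<in> W" unfolding W_def n_def using N_spec[OF assms] U_C[OF assms] by auto
  obtain e where e: "e > 0" "\<And>w. w \<in> C \<Longrightarrow> dist w z < e \<Longrightarrow> w \<in> W"
    using opW zW unfolding openin_euclidean_subtopology_iff by blast
  have "w \<in> U \<and> N w = N z" if "w \<in> W" for w
  proof -
    have wC: "w \<in> C" and wA: "\<And>k. k < n \<Longrightarrow> (Tinv ^^ k) w \<in> A" and wB: "(Tinv ^^ n) w \<in> B"
      using that unfolding W_def by auto
    have "w \<in> U" using wC wB unfolding U_set_def by auto
    moreover have "N w = n" unfolding N_B_def
    proof (rule Least_equality)
      show "(Tinv ^^ n) w \<in> B" by (rule wB)
      fix k assume "(Tinv ^^ k) w \<in> B"
      then show "n \<le> k" using wA part2 by (meson disjoint_iff not_le)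
    qed
    ultimately show ?thesis by (simp add: n_def)
  qed
  then show ?thesis using e by blast
qed

lemma Tinvpow_T: "x \<in> C \<Longrightarrow> (Tinv ^^ Suc k) (T x) = (Tinv ^^ k) x"
  by (simp only: funpow_Suc_right o_apply TinvT)

lemma T_U: assumes "x \<in> U"
  shows "T x \<in> U" "N (T x) = (if T x \<in> B then 0 else Suc (N x))"
proof -
  have xC: "x \<in> C" using assms U_C by blast
  have "(Tinv ^^ Suc (N x)) (T x) \<in> B" using N_spec(1)[OF assms] Tinvpow_T[OF xC] by simp
  then show TU: "T x \<in> U" unfolding U_set_def using T_C[OF xC] by blast
  show "N (T x) = (if T x \<in> B then 0 else Suc (N x))"
  proof (cases "T x \<in> B")
    case True
    then show ?thesis unfolding N_B_def by (simp add: Least_eq_0)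
  next
    case False
    have "(LEAST k. (Tinv ^^ k) (T x) \<in> B) = Suc (LEAST m. (Tinv ^^ Suc m) (T x) \<in> B)"
      by (rule Least_Suc[where P="\<lambda>k. (Tinv ^^ k) (T x) \<in> B", OF \<open>(Tinv ^^ Suc (N x)) (T x) \<in> B\<close>]) (use False in simp)
    also have "(LEAST m. (Tinv ^^ Suc m) (T x) \<in> B) = N x"
      unfolding N_B_def Tinvpow_T[OF xC] ..
    finally show ?thesis using False unfolding N_B_def by simp
  qed
qed

lemma Tpow_U: "x \<in> U \<Longrightarrow> (T ^^ k) x \<in> U"
  by (induction k) (auto intro: T_U)

lemma f_S: assumes "x \<in> U" shows "f (x, N x mod 2) = (T x, N (T x) mod 2)"
proof -
  have "T x \<in> C" using assms U_C T_C by blast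
  show ?thesis
  proof (cases "T x \<in> B")
    case True
    then have "T x \<notin> A" using part2 by blast
    then show ?thesis using True T_U(2)[OF assms] unfolding skew_f_def by simp
  next
    case False
    then have TA: "T x \<in> A" using part1 \<open>T x \<in> C\<close> by blast
    have NT: "N (T x) = Suc (N x)" using False T_U(2)[OF assms] by simp
    show ?thesis
    proof (cases "N x mod 2 = 0")
      case True then show ?thesis using TA NT unfolding skew_f_def by (simp add: mod_Suc)
    next
      case False then show ?thesis using TA NT unfolding skew_f_def by (simp add: mod_Suc)
    qed
  qed
qed

lemma f_S_sub: "f ` S \<subseteq> S"
proof
  fix p assume "p \<in> f ` S"
  then obtain x where x: "x \<in> U" "p = f (x, N x mod 2)" by blast
  then have "p = (T x, N (T x) mod 2)" using f_S by simp
  then show "p \<in> S" using T_U(1)[OF x(1)] by blast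
qed

lemma mod2_01: "(n::nat) mod 2 \<in> {0,1}"
proof -
  have "n mod 2 < 2" by simp
  then show ?thesis by (auto simp: less_Suc_eq numeral_2_eq_2)
qed

lemma S_sub: "S \<subseteq> C \<times> {0,1}"
proof
  fix p assume "p \<in> S"
  then obtain x where "p = (x, N x mod 2)" "x \<in> U" by blast
  then show "p \<in> C \<times> {0,1}" using U_C mod2_01 by blast
qed

lemma closedC01: "closed (C \<times> {0::nat,1})"
  by (intro closed_Times cantor_closed) auto

lemma X_eq: "X = closure S" unfolding X_set_def ..

lemma X_sub: "X \<subseteq> C \<times> {0,1}"
  unfolding X_eq by (rule closure_minimal[OF S_sub closedC01])

lemma S_X: "S \<subseteq> X" unfolding X_eq by (rule closure_subset)

lemma closedX: "closed X" unfolding X_eq by simp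

lemma compactX: "compact X"
proof -
  have "compact (C \<times> {0::nat,1})" by (intro compact_Times cantor_compact) auto
  then have "compact ((C \<times> {0::nat,1}) \<inter> X)" using closedX by blast
  moreover have "(C \<times> {0::nat,1}) \<inter> X = X" using X_sub by blast
  ultimately show ?thesis by simp
qed

lemma X_graph: assumes "(w, j) \<in> X" "w \<in> U" shows "j = N w mod 2"
proof -
  obtain e where e: "e > 0" "\<And>v. v \<in> C \<Longrightarrow> dist v w < e \<Longrightarrow> v \<in> U \<and> N v = N w"
    using local_const[OF assms(2)] by blast
  have wc: "(w, j) \<in> closure S" using assms(1) X_eq by simp
  then obtain v where v: "(v, j) \<in> S" "dist v w < e"
    unfolding closure_prod_iff using e(1) by blast
  from v(1) have vU: "v \<in> U" and vj: "j = N v mod 2" by auto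
  have "N v = N w" using e(2)[OF U_C[OF vU] v(2)] by simp
  then show ?thesis using vj by simp
qed

lemma contTfst: "continuous_on X (\<lambda>p. T (fst p))"
  by (rule continuous_on_compose2[OF contT continuous_on_fst[OF continuous_on_id]]) (use X_sub in auto)

lemma open_nat_in: "openin (top_of_set UNIV) (Q::nat set)"
  by (metis open_discrete open_openin subtopology_UNIV)

lemma cont_f: "continuous_on X f"
proof -
  define P where "P p \<longleftrightarrow> snd p = 0 \<and> T (fst p) \<in> A" for p :: "real \<times> nat"
  define g where "g p = (T (fst p), snd p)" for p :: "real \<times> nat"
  have contg: "continuous_on X g" unfolding g_def
    by (intro continuous_on_Pair contTfst continuous_on_snd continuous_on_id)
  have gX: "g \<in> X \<rightarrow> C \<times> UNIV" unfolding g_def using X_sub T_C by auto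
  define SA where "SA = X \<inter> g -` (A \<times> {0})"
  define SB where "SB = X \<inter> g -` (B \<times> UNIV \<union> C \<times> (UNIV - {0}))"
  have XU: "SA \<union> SB = X"
  proof -
    have "p \<in> SA \<union> SB" if "p \<in> X" for p
    proof -
      have "T (fst p) \<in> C" using that X_sub T_C by auto
      then show ?thesis unfolding SA_def SB_def g_def using that part1 by auto
    qed
    then show ?thesis unfolding SA_def SB_def by blast
  qed
  have opA: "openin (top_of_set (C \<times> UNIV)) (A \<times> {0::nat})"
    by (rule openin_Times[OF Aop open_nat_in])
  have opB: "openin (top_of_set (C \<times> UNIV)) (B \<times> UNIV \<union> C \<times> (UNIV - {0::nat}))"
  proof -
    have oC: "openin (top_of_set C) C" by (rule openin_subtopology_self)
    show ?thesis by (intro openin_Un openin_Times Bop open_nat_in oC)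
  qed
  have "openin (top_of_set X) SA" unfolding SA_def
    by (rule continuous_openin_preimage[OF contg gX opA])
  then have oSA: "openin (top_of_set (SA \<union> SB)) SA" using XU by simp
  have "openin (top_of_set X) SB" unfolding SB_def
    by (rule continuous_openin_preimage[OF contg gX opB])
  then have oSB: "openin (top_of_set (SA \<union> SB)) SB" using XU by simp
  have c1: "continuous_on SA (\<lambda>p. (T (fst p), 1::nat))"
    by (rule continuous_on_Pair[OF continuous_on_subset[OF contTfst] continuous_on_const]) (simp add: SA_def)
  have c2: "continuous_on SB (\<lambda>p. (T (fst p), 0::nat))"
    by (rule continuous_on_Pair[OF continuous_on_subset[OF contTfst] continuous_on_const]) (simp add: SB_def)
  have agree: "(T (fst p), 1::nat) = (T (fst p), 0)" if "p \<in> SA \<and> \<not> P p \<or> p \<in> SB \<and> P p" for p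
  proof -
    have "\<not> (p \<in> SA \<and> \<not> P p)" unfolding SA_def P_def g_def by auto
    moreover have "\<not> (p \<in> SB \<and> P p)" unfolding SB_def P_def g_def using part2 A_C by auto
    ultimately show ?thesis using that by blast
  qed
  have "continuous_on (SA \<union> SB) (\<lambda>p. if P p then (T (fst p), 1::nat) else (T (fst p), 0))"
    by (rule continuous_on_cases_local_open[OF oSA oSB c1 c2 agree])
  moreover have "f p = (if P p then (T (fst p), 1::nat) else (T (fst p), 0))" for p
    by (cases p) (simp add: skew_f_def P_def)
  ultimately show ?thesis unfolding XU by simp
qed

lemma fX_sub: "f ` X \<subseteq> X"
proof -
  have "f ` closure S \<subseteq> X"
    by (rule image_closure_subset) (use cont_f X_eq closedX f_S_sub S_X in auto)
  then show ?thesis using X_eq by simp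
qed

lemma closed_fX: "closed (f ` X)"
  by (intro compact_imp_closed compact_continuous_image cont_f compactX)

lemma S_fX: "S \<subseteq> f ` X"
proof
  fix p assume "p \<in> S"
  then obtain x where p: "p = (x, N x mod 2)" and xU: "x \<in> U" by blast
  have xC: "x \<in> C" using U_C xU by blast
  show "p \<in> f ` X"
  proof (cases "Tinv x \<in> U")
    case True
    have "f (Tinv x, N (Tinv x) mod 2) = (x, N x mod 2)"
      using f_S[OF True] TTinv[OF xC] by simp
    moreover have "(Tinv x, N (Tinv x) mod 2) \<in> X" using S_X True by blast
    ultimately show ?thesis using p by force
  next
    case False
    have xB: "x \<in> B"
    proof (rule ccontr)
      assume "x \<notin> B"
      have "N x \<noteq> 0"
      proof
        assume "N x = 0"
        with N_spec(1)[OF xU] have "x \<in> B" by simp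
        with \<open>x \<notin> B\<close> show False by simp
      qed
      then obtain j where j: "N x = Suc j" using not0_implies_Suc by blast
      have "(Tinv ^^ j) (Tinv x) \<in> B" using N_spec(1)[OF xU] unfolding j
        by (simp only: funpow_Suc_right o_apply)
      then have "Tinv x \<in> U" unfolding U_set_def using Tinv_C[OF xC] by blast
      with False show False by simp
    qed
    have N0: "N x = 0" unfolding N_B_def using xB by (simp add: Least_eq_0)
    have "(x, 0) \<in> closure (f ` S)"
      unfolding closure_prod_iff
    proof (intro allI impI)
      fix e :: real assume "e > 0"
      obtain e1 where e1: "e1 > 0" "\<And>w. w \<in> C \<Longrightarrow> dist w x < e1 \<Longrightarrow> w \<in> B"
        using Bop xB unfolding openin_euclidean_subtopology_iff by blast
      define e2 where "e2 = min e e1"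
      have e2: "e2 > 0" "e2 \<le> e" "e2 \<le> e1" using e1 \<open>e > 0\<close> by (auto simp: e2_def)
      obtain w where w: "w \<in> C" "w \<noteq> x" "dist w x < e2" using cantor_perfect[OF xC e2(1)] by blast
      have xx0: "x \<noteq> x0" using xB x0A part2 by blast
      have "w \<in> closure {zpow T Tinv (int 1 * k) x | k::int. True}"
        using minimal[OF xC xx0, of 1] w(1) by auto
      moreover have "min (e2 - dist w x) (dist w x) > 0" using w by auto
      ultimately obtain q where q: "q \<in> {zpow T Tinv (int 1 * k) x | k::int. True}"
        "dist q w < min (e2 - dist w x) (dist w x)"
        using closure_approachable by blast
      then obtain k where k: "q = zpow T Tinv k x" by auto
      have dqx: "dist q x < e2" using q(2) dist_triangle[of q x w] by auto
      have qx: "q \<noteq> x" using q(2) dist_triangle[of w x q] by (auto simp: dist_commute)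
      have qC: "q \<in> C" using k zpow_C xC by simp
      have qB: "q \<in> B" using e1(2)[OF qC] dqx e2 by auto
      show "\<exists>v. (v, 0) \<in> f ` S \<and> dist v x < e"
      proof (cases "k \<ge> 0")
        case True
        then have q': "q = (T ^^ nat k) x" using k by (simp add: zpow_def)
        have "nat k \<noteq> 0" using q' qx by auto
        then obtain j where j: "nat k = Suc j" using not0_implies_Suc by blast
        have qT: "q = T ((T ^^ j) x)" using q' j by simp
        have jU: "(T ^^ j) x \<in> U" by (rule Tpow_U[OF xU])
        have "N q = 0" unfolding N_B_def using qB by (simp add: Least_eq_0)
        then have "f ((T ^^ j) x, N ((T ^^ j) x) mod 2) = (q, 0)" using f_S[OF jU] qT by simp
        moreover have "((T ^^ j) x, N ((T ^^ j) x) mod 2) \<in> S" using jU by blast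
        ultimately have qS: "(q, 0) \<in> f ` S" by force
        have "dist q x < e" using dqx e2 by simp
        with qS show ?thesis by blast
      next
        case False
        then have q': "q = (Tinv ^^ nat (- k)) x" using k by (simp add: zpow_def)
        have "nat (- k) \<noteq> 0" using False by auto
        then obtain j where j: "nat (- k) = Suc j" using not0_implies_Suc by blast
        have "(Tinv ^^ j) (Tinv x) \<in> B" using qB q' j by (simp only: funpow_Suc_right o_apply)
        then have "Tinv x \<in> U" unfolding U_set_def using Tinv_C[OF xC] by blast
        with \<open>Tinv x \<notin> U\<close> show ?thesis by simp
      qed
    qed
    moreover have "closure (f ` S) \<subseteq> f ` X"
      by (rule closure_minimal[OF _ closed_fX]) (use S_X in blast)
    ultimately show ?thesis using p N0 by auto
  qed
qed

lemma fX_eq: "f ` X = X"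
proof
  show "f ` X \<subseteq> X" by (rule fX_sub)
  show "X \<subseteq> f ` X" unfolding X_eq by (rule closure_minimal[OF S_fX[unfolded X_eq] closed_fX[unfolded X_eq]])
qed

lemma fst_f: "fst (f p) = T (fst p)"
  by (cases p) (simp add: skew_f_def)

lemma orbit_dense:
  assumes xX: "(x, i) \<in> X" and xx0: "x \<noteq> x0" and m: "m \<ge> (1::nat)"
    and yX: "\<forall>k. y k \<in> X" and y0: "y 0 = (x, i)" and yf: "\<forall>k. f (y k) = y (k + 1)"
  shows "closure {y (int m * k) | k. True} = X"
proof -
  have xC: "x \<in> C" using xX X_sub by auto
  have pos: "fst (y (int n)) = (T ^^ n) x" for n
  proof (induction n)
    case 0 then show ?case using y0 by simp
  next
    case (Suc n)
    have "fst (y (int (Suc n))) = fst (f (y (int n)))" using yf by (metis of_nat_Suc add.commute)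
    also have "\<dots> = T ((T ^^ n) x)" using Suc by (simp add: fst_f)
    finally show ?case by simp
  qed
  have neg: "fst (y (- int n)) = (Tinv ^^ n) x" for n
  proof (induction n)
    case 0 then show ?case using y0 by simp
  next
    case (Suc n)
    define p where "p = y (- int (Suc n))"
    have "f p = y (- int (Suc n) + 1)" unfolding p_def using yf by blast
    also have "- int (Suc n) + 1 = - int n" by simp
    finally have "T (fst p) = (Tinv ^^ n) x" using Suc fst_f by metis
    moreover have "fst p \<in> C"
    proof -
      have "p \<in> C \<times> {0,1}" using yX X_sub unfolding p_def by blast
      then show ?thesis by (simp add: mem_Times_iff)
    qed
    ultimately have "fst p = Tinv ((Tinv ^^ n) x)" using TinvT by metis
    then show ?case unfolding p_def by simp
  qed
  have fy: "fst (y k) = zpow T Tinv k x" for k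
  proof (cases "k \<ge> 0")
    case True
    then have "k = int (nat k)" by simp
    then show ?thesis using pos[of "nat k"] True by (simp add: zpow_def)
  next
    case False
    then have "k = - int (nat (- k))" by simp
    then show ?thesis using neg[of "nat (- k)"] False by (simp add: zpow_def)
  qed
  define Y where "Y = {y (int m * k) | k. True}"
  have YX: "Y \<subseteq> X" unfolding Y_def using yX by blast
  have SY: "S \<subseteq> closure Y"
  proof
    fix p assume "p \<in> S"
    then obtain z where p: "p = (z, N z mod 2)" and zU: "z \<in> U" by blast
    have "(z, N z mod 2) \<in> closure Y" unfolding closure_prod_iff
    proof (intro allI impI)
      fix e :: real assume "e > 0"
      obtain e0 where e0: "e0 > 0" "\<And>w. w \<in> C \<Longrightarrow> dist w z < e0 \<Longrightarrow> w \<in> U \<and> N w = N z"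
        using local_const[OF zU] by blast
      have me: "min e e0 > 0" using e0 \<open>e > 0\<close> by simp
      have "z \<in> closure {zpow T Tinv (int m * k) x | k::int. True}"
        using minimal[OF xC xx0 m] U_C[OF zU] by auto
      then obtain q where q: "q \<in> {zpow T Tinv (int m * k) x | k::int. True}" "dist q z < min e e0"
        using closure_approachable me by blast
      then obtain k where k: "q = zpow T Tinv (int m * k) x" by auto
      have qC: "q \<in> C" using k zpow_C xC by simp
      have qU: "q \<in> U" and Nq: "N q = N z" using e0(2)[OF qC] q(2) by auto
      have yk: "fst (y (int m * k)) = q" using fy k by simp
      have "y (int m * k) \<in> X" using yX by blast
      then have "(q, snd (y (int m * k))) \<in> X" using yk by (metis prod.collapse)
      then have "snd (y (int m * k)) = N q mod 2" using X_graph qU by blast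
      then have "y (int m * k) = (q, N z mod 2)" using yk Nq by (metis prod.collapse)
      then have "(q, N z mod 2) \<in> Y" unfolding Y_def by (metis (mono_tags, lifting) mem_Collect_eq)
      moreover have "dist q z < e" using q(2) by simp
      ultimately show "\<exists>v. (v, N z mod 2) \<in> Y \<and> dist v z < e" by blast
    qed
    then show "p \<in> closure Y" using p by simp
  qed
  have "X \<subseteq> closure Y" unfolding X_eq by (rule closure_minimal[OF SY]) simp
  moreover have "closure Y \<subseteq> X" by (rule closure_minimal[OF YX closedX])
  ultimately show ?thesis unfolding Y_def by blast
qed

end
theorem lemma7p3:
  fixes T Tinv :: "real \<Rightarrow> real" and x0 :: real and A B :: "real set"
  assumes homeo: "homeomorphism cantor_set cantor_set T Tinv"
    and fix0: "x0 \<in> cantor_set" "T x0 = x0"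
    and fix_unique: "\<And>x. x \<in> cantor_set \<Longrightarrow> T x = x \<Longrightarrow> x = x0"
    and minimal: "\<And>x m. x \<in> cantor_set \<Longrightarrow> x \<noteq> x0 \<Longrightarrow> m \<ge> (1::nat) \<Longrightarrow>
         cantor_set \<subseteq> closure {zpow T Tinv (int m * k) x | k::int. True}"
    and part: "A \<union> B = cantor_set" "A \<inter> B = {}"
    and A_clopen: "openin (top_of_set cantor_set) A" "closedin (top_of_set cantor_set) A"
    and B_clopen: "openin (top_of_set cantor_set) B" "closedin (top_of_set cantor_set) B"
    and x0A: "x0 \<in> A"
  shows "skew_f A T ` X_set Tinv B = X_set Tinv B \<and>
    (\<forall>x i. (x, i) \<in> X_set Tinv B \<longrightarrow> x \<noteq> x0 \<longrightarrow>
      (\<forall>m::nat. m \<ge> 1 \<longrightarrow>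
        (\<forall>y :: int \<Rightarrow> real \<times> nat.
           (\<forall>k. y k \<in> X_set Tinv B) \<and> y 0 = (x, i) \<and> (\<forall>k. skew_f A T (y k) = y (k + 1))
           \<longrightarrow> closure {y (int m * k) | k. True} = X_set Tinv B)))"
proof -
  interpret sk T Tinv x0 A B
    by (rule sk.intro) (fact homeo fix0(1) minimal part A_clopen(1) B_clopen(1) x0A)+
  show ?thesis
  proof (intro conjI allI impI)
    show "skew_f A T ` X_set Tinv B = X_set Tinv B" by (rule fX_eq)
  next
    fix x :: real and i :: nat and m :: nat and y :: "int \<Rightarrow> real \<times> nat"
    assume a: "(x, i) \<in> X_set Tinv B" "x \<noteq> x0" "(1::nat) \<le> m"
      and b: "(\<forall>k. y k \<in> X_set Tinv B) \<and> y 0 = (x, i) \<and> (\<forall>k. skew_f A T (y k) = y (k + 1))"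
    show "closure {y (int m * k) | k. True} = X_set Tinv B"
      using orbit_dense[OF a] b by blast
  qed
qed

end
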